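(* Let $p,q \geq 2$. Let $M_1, M_2 \subset \widetilde{\mathrm{Ein}}^{p,q}$ be two Minkowski patches with $M_1 \cap M_2 \neq \emptyset$. Then $\pi_{\mathbf{X}}(M_1 \cap M_2)$ is a connected component of $\pi_{\mathbf{X}}(M_1) \cap \pi_{\mathbf{X}}(M_2)$.
   Context: $\mathrm{Ein}^{p,q}$ is the set of isotropic lines of $\mathbb{R}^{p+1,q+1}$ with its induced conformal structure. $\widetilde{\mathrm{Ein}}^{p,q} \cong \mathbb{S}^p \times \mathbb{S}^q$ is the set of isotropic vectors of $\mathbb{R}^{p+1,q+1}$ of Euclidean norm $1$, and $\pi_{\mathbf{X}} : \widetilde{\mathrm{Ein}}^{p,q} \to \mathrm{Ein}^{p,q}$ the natural double (universal, since $\min(p,q)\ge2$) cover. For $x=[v]\in\mathrm{Ein}^{p,q}$, the Minkowski patch $M_x=\{[w]: B(v,w)\ne 0\}$; a Minkowski patch of $\widetilde{\mathrm{Ein}}^{p,q}$ is a connected component of $\pi_{\mathbf{X}}^{-1}(M_x)$ for some Minkowski patch $M_x$ of $\mathrm{Ein}^{p,q}$. *)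

theory Defs
  imports "HOL-Analysis.Analysis"
begin

text \<open>R^{p+1,q+1} is modelled as real^'p \<times> real^'q with CARD('p) = p+1, CARD('q) = q+1.\<close>

definition Bform :: "((real^'p) \<times> (real^'q)) \<Rightarrow> ((real^'p) \<times> (real^'q)) \<Rightarrow> real" where
  "Bform v w = fst v \<bullet> fst w - snd v \<bullet> snd w"

text \<open>Universal cover: isotropic vectors of Euclidean norm 1.\<close>
definition tEin :: "((real^'p) \<times> (real^'q)) set" where
  "tEin = {v. Bform v v = 0 \<and> norm v = 1}"

text \<open>A line is represented as the set of its points.\<close>
definition piX :: "((real^'p) \<times> (real^'q)) \<Rightarrow> ((real^'p) \<times> (real^'q)) set" where
  "piX v = range (\<lambda>t::real. t *\<^sub>R v)"

definition Ein :: "((real^'p) \<times> (real^'q)) set set" where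
  "Ein = {piX v | v. v \<noteq> 0 \<and> Bform v v = 0}"

definition Ein_top :: "((real^'p) \<times> (real^'q)) set topology" where
  "Ein_top = topology (\<lambda>U. U \<subseteq> Ein \<and> openin (top_of_set tEin) {v \<in> tEin. piX v \<in> U})"

definition mink_patch_Ein :: "((real^'p) \<times> (real^'q)) set \<Rightarrow> ((real^'p) \<times> (real^'q)) set set" where
  "mink_patch_Ein x = {y \<in> Ein. \<exists>v w. x = piX v \<and> y = piX w \<and> Bform v w \<noteq> 0}"

definition mink_patch_tEin :: "((real^'p) \<times> (real^'q)) set \<Rightarrow> bool" where
  "mink_patch_tEin M \<longleftrightarrow> (\<exists>x\<in>Ein. M \<in> components (tEin \<inter> piX -` mink_patch_Ein x))"

end

theory Submission
  imports Defs
begin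


lemma normsq_perp:
  fixes a \<alpha> :: "'a::real_inner"
  assumes "norm \<alpha> = 1"
  shows "norm (a - (a \<bullet> \<alpha>) *\<^sub>R \<alpha>) ^ 2 = norm a ^ 2 - (a \<bullet> \<alpha>) ^ 2"
proof -
  have "\<alpha> \<bullet> \<alpha> = 1" using assms by (simp add: dot_square_norm)
  thus ?thesis
    unfolding power2_norm_eq_inner by (simp add: inner_diff_left inner_diff_right inner_commute power2_eq_square algebra_simps)
qed

lemma connected_Bset:
  fixes \<beta> :: "'b::euclidean_space"
  assumes "norm \<beta> = 1" "DIM('b) \<ge> 3"
  shows "connected {b. norm b ^ 2 - (b \<bullet> \<beta>) ^ 2 > 0}"
proof -
  define H where "H = {z. \<beta> \<bullet> z = 0}"
  have "\<beta> \<noteq> 0" using assms by auto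
  have sH: "subspace H" unfolding H_def by (rule subspace_hyperplane)
  have "dim H = DIM('b) - 1" unfolding H_def using \<open>\<beta> \<noteq> 0\<close> by (rule dim_hyperplane)
  hence "aff_dim H \<noteq> 1" using sH assms(2) by (simp add: aff_dim_subspace)
  hence c1: "connected (H - {0})"
    using sH by (intro connected_punctured_convex subspace_imp_convex)
  have "connected ((\<lambda>(z,s). z + s *\<^sub>R \<beta>) ` ((H - {0}) \<times> (UNIV::real set)))"
    by (intro connected_continuous_image connected_Times c1 connected_UNIV)
       (auto intro!: continuous_intros simp: split_beta)
  moreover have "(\<lambda>(z,s). z + s *\<^sub>R \<beta>) ` ((H - {0}) \<times> (UNIV::real set)) = {b. norm b ^ 2 - (b \<bullet> \<beta>) ^ 2 > 0}"
  proof (intro equalityI subsetI)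
    fix b assume "b \<in> (\<lambda>(z,s). z + s *\<^sub>R \<beta>) ` ((H - {0}) \<times> (UNIV::real set))"
    then obtain z s where z: "\<beta> \<bullet> z = 0" "z \<noteq> 0" and b: "b = z + s *\<^sub>R \<beta>"
      by (auto simp: H_def)
    have bb: "\<beta> \<bullet> \<beta> = 1" using assms by (simp add: dot_square_norm)
    have "b \<bullet> \<beta> = s" using z bb by (simp add: b inner_add_left inner_commute inner_add_right)
    hence "b - (b \<bullet> \<beta>) *\<^sub>R \<beta> = z" by (simp add: b)
    hence e: "norm z ^ 2 = norm b ^ 2 - (b \<bullet> \<beta>) ^ 2" using normsq_perp[OF assms(1), of b] by simp
    have "norm z ^ 2 > 0" using z by simp
    with e show "b \<in> {b. norm b ^ 2 - (b \<bullet> \<beta>) ^ 2 > 0}" by simp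
  next
    fix b assume bpos: "b \<in> {b. norm b ^ 2 - (b \<bullet> \<beta>) ^ 2 > 0}"
    hence "norm (b - (b \<bullet> \<beta>) *\<^sub>R \<beta>) ^ 2 > 0" using normsq_perp[OF assms(1), of b] by simp
    hence nz: "b - (b \<bullet> \<beta>) *\<^sub>R \<beta> \<noteq> 0" by auto
    have bb: "\<beta> \<bullet> \<beta> = 1" using assms by (simp add: dot_square_norm)
    have "\<beta> \<bullet> (b - (b \<bullet> \<beta>) *\<^sub>R \<beta>) = 0" using bb by (simp add: inner_diff_right inner_commute)
    hence m: "(b - (b \<bullet> \<beta>) *\<^sub>R \<beta>, b \<bullet> \<beta>) \<in> (H - {0}) \<times> (UNIV::real set)"
      using nz by (auto simp: H_def)
    have eq: "b = (\<lambda>(z,s). z + s *\<^sub>R \<beta>) (b - (b \<bullet> \<beta>) *\<^sub>R \<beta>, b \<bullet> \<beta>)" by simp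
    show "b \<in> (\<lambda>(z,s). z + s *\<^sub>R \<beta>) ` ((H - {0}) \<times> (UNIV::real set))"
      using image_eqI[where f="\<lambda>(z,s). z + s *\<^sub>R \<beta>", OF eq m] .
  qed
  ultimately show ?thesis by simp
qed

lemma convex_perp_lt:
  fixes \<alpha> :: "'a::euclidean_space"
  assumes "norm \<alpha> = 1"
  shows "convex {a. norm a ^ 2 - (a \<bullet> \<alpha>) ^ 2 < c}"
proof (cases "c > 0")
  case True
  have lin: "linear (\<lambda>a. a - (a \<bullet> \<alpha>) *\<^sub>R \<alpha>)"
    by (intro linear_compose_sub linearI) (auto simp: inner_add_left scaleR_add_left)
  have "{a. norm a ^ 2 - (a \<bullet> \<alpha>) ^ 2 < c} = (\<lambda>a. a - (a \<bullet> \<alpha>) *\<^sub>R \<alpha>) -` ball 0 (sqrt c)"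
  proof -
    have "\<And>a. norm a ^ 2 - (a \<bullet> \<alpha>) ^ 2 < c \<longleftrightarrow> norm (a - (a \<bullet> \<alpha>) *\<^sub>R \<alpha>) < sqrt c"
      using True by (simp add: normsq_perp[OF assms, symmetric] real_less_rsqrt real_sqrt_less_iff
          flip: real_less_lsqrt) (metis norm_ge_zero real_sqrt_abs real_sqrt_less_iff abs_of_nonneg power2_eq_square real_sqrt_mult_self)
    thus ?thesis by auto
  qed
  thus ?thesis using convex_linear_vimage[OF lin convex_ball] by simp
next
  case False
  have "norm a ^ 2 - (a \<bullet> \<alpha>) ^ 2 \<ge> 0" for a using normsq_perp[OF assms, of a, symmetric] by simp
  hence "{a. norm a ^ 2 - (a \<bullet> \<alpha>) ^ 2 < c} = {}" using False by (auto simp: not_less intro: order_trans)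
  thus ?thesis by simp
qed

lemma conn_L:
  fixes \<alpha> :: "'a::euclidean_space" and \<beta> :: "'b::euclidean_space"
  assumes "norm \<alpha> = 1" "norm \<beta> = 1" "DIM('b) \<ge> 3"
  shows "connected {(a,b). norm a ^ 2 - (a \<bullet> \<alpha>) ^ 2 < norm b ^ 2 - (b \<bullet> \<beta>) ^ 2}"
proof -
  define Bs where "Bs = {b. norm b ^ 2 - (b \<bullet> \<beta>) ^ 2 > 0}"
  define T where "T b = ({a. norm a ^ 2 - (a \<bullet> \<alpha>) ^ 2 < norm b ^ 2 - (b \<bullet> \<beta>) ^ 2} \<times> {b}) \<union> ({0} \<times> Bs)" for b
  have cB: "connected Bs" unfolding Bs_def by (rule connected_Bset[OF assms(2,3)])
  have cT: "connected (T b)" if "b \<in> Bs" for b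
  proof -
    have c1: "connected ({a. norm a ^ 2 - (a \<bullet> \<alpha>) ^ 2 < norm b ^ 2 - (b \<bullet> \<beta>) ^ 2} \<times> {b})"
      by (intro connected_Times convex_connected convex_perp_lt[OF assms(1)] connected_sing)
    have c2: "connected ({0::'a} \<times> Bs)" by (intro connected_Times connected_sing cB)
    have c3: "(0,b) \<in> ({a. norm a ^ 2 - (a \<bullet> \<alpha>) ^ 2 < norm b ^ 2 - (b \<bullet> \<beta>) ^ 2} \<times> {b}) \<inter> ({0} \<times> Bs)"
      using that by (auto simp: Bs_def)
    show ?thesis unfolding T_def by (rule connected_Un[OF c1 c2]) (use c3 in blast)
  qed
  have ne: "\<Inter> (T ` Bs) \<noteq> {}"
  proof (cases "Bs = {}")
    case False then obtain b where "b \<in> Bs" by auto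
    hence "(0,b) \<in> \<Inter> (T ` Bs)" by (auto simp: T_def)
    thus ?thesis by auto
  qed simp
  have nn: "norm a ^ 2 - (a \<bullet> \<alpha>) ^ 2 \<ge> 0" for a using normsq_perp[OF assms(1), of a, symmetric] by simp
  have "\<Union> (T ` Bs) = {(a,b). norm a ^ 2 - (a \<bullet> \<alpha>) ^ 2 < norm b ^ 2 - (b \<bullet> \<beta>) ^ 2}"
  proof (intro equalityI subsetI)
    fix z assume "z \<in> \<Union> (T ` Bs)"
    then obtain b where b: "b \<in> Bs" "z \<in> T b" by blast
    show "z \<in> {(a,b). norm a ^ 2 - (a \<bullet> \<alpha>) ^ 2 < norm b ^ 2 - (b \<bullet> \<beta>) ^ 2}"
      using b(2) unfolding T_def Bs_def by auto
  next
    fix z assume z: "z \<in> {(a,b). norm a ^ 2 - (a \<bullet> \<alpha>) ^ 2 < norm b ^ 2 - (b \<bullet> \<beta>) ^ 2}"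
    obtain a b where ab: "z = (a,b)" by force
    have lt: "norm a ^ 2 - (a \<bullet> \<alpha>) ^ 2 < norm b ^ 2 - (b \<bullet> \<beta>) ^ 2" using z ab by simp
    have "b \<in> Bs" unfolding Bs_def using lt nn[of a] by simp
    moreover have "z \<in> T b" unfolding T_def using lt ab by simp
    ultimately show "z \<in> \<Union> (T ` Bs)" by blast
  qed
  moreover have "connected (\<Union> (T ` Bs))"
    by (rule connected_Union) (use cT ne in auto)
  ultimately show ?thesis by simp
qed



lemma Bform_sym: "Bform v w = Bform w v"
  by (simp add: Bform_def inner_commute)

lemma Bform_lin:
  "Bform (x + y) w = Bform x w + Bform y w"
  "Bform w (x + y) = Bform w x + Bform w y"
  "Bform (x - y) w = Bform x w - Bform y w"
  "Bform w (x - y) = Bform w x - Bform w y"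
  "Bform (c *\<^sub>R x) w = c * Bform x w"
  "Bform w (c *\<^sub>R x) = c * Bform w x"
  "Bform (- x) w = - Bform x w"
  "Bform w (- x) = - Bform w x"
  "Bform 0 w = 0" "Bform w 0 = 0"
  by (simp_all add: Bform_def inner_add_left inner_add_right inner_diff_left inner_diff_right algebra_simps)

lemma continuous_on_Bform [continuous_intros]:
  "continuous_on S f \<Longrightarrow> continuous_on S g \<Longrightarrow> continuous_on S (\<lambda>x. Bform (f x) (g x))"
  unfolding Bform_def by (intro continuous_intros)

lemma S_connected:
  fixes v1 v2 :: "(real^'p::finite) \<times> (real^'q::finite)"
  assumes p: "CARD('p) \<ge> 3" and q: "CARD('q) \<ge> 3"
    and n1: "norm (fst v1) = 1" and n2: "norm (snd v1) = 1" and iso2: "Bform v2 v2 = 0"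
  shows "connected {u \<in> tEin. Bform v1 u > 0 \<and> Bform v2 u > 0}"
proof -
  define w0 :: "(real^'p) \<times> (real^'q)" where "w0 = (1/2) *\<^sub>R (fst v1, - snd v1)"
  have aa: "fst v1 \<bullet> fst v1 = 1" "snd v1 \<bullet> snd v1 = 1" using n1 n2 by (simp_all add: dot_square_norm)
  have v11: "Bform v1 v1 = 0" using aa by (simp add: Bform_def)
  have w00: "Bform w0 w0 = 0" using aa by (simp add: Bform_def w0_def)
  have vw: "Bform v1 w0 = 1" using aa by (simp add: Bform_def w0_def)
  define \<pi> where "\<pi> = (\<lambda>x. x - Bform x w0 *\<^sub>R v1 - Bform x v1 *\<^sub>R w0)"
  define \<Psi> where "\<Psi> = (\<lambda>x. w0 + \<pi> x - (Bform (\<pi> x) (\<pi> x) / 2) *\<^sub>R v1)"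
  define nrm where "nrm = (\<lambda>x. (1 / norm (\<Psi> x)) *\<^sub>R \<Psi> x)"
  define D where "D = {x. Bform v2 (\<Psi> x) > 0}"
  define c where "c = Bform v2 v1"
  define \<mu> where "\<mu> = Bform v2 w0"
  define Qf where "Qf = (\<lambda>y. Bform y y - 2 * Bform y w0 * Bform y v1)"
  note simps = Bform_lin Bform_sym
  have \<Psi>iso: "Bform (\<Psi> x) (\<Psi> x) = 0" for x
    using v11 w00 vw unfolding \<Psi>_def \<pi>_def by (simp add: simps algebra_simps)
  have \<Psi>v1: "Bform v1 (\<Psi> x) = 1" for x
    using v11 w00 vw unfolding \<Psi>_def \<pi>_def by (simp add: simps algebra_simps)
  have \<Psi>nz: "\<Psi> x \<noteq> 0" for x using \<Psi>v1[of x] by (auto simp: Bform_lin)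
  have Fexp: "Bform v2 (\<Psi> x) = \<mu> + Bform v2 x - Bform x w0 * c - Bform x v1 * \<mu> - c / 2 * Qf x" for x
    using v11 w00 vw unfolding \<Psi>_def \<pi>_def c_def \<mu>_def Qf_def
    by (simp add: simps algebra_simps) (simp add: field_simps)
  have cont: "continuous_on D nrm"
    unfolding nrm_def \<Psi>_def \<pi>_def
    by (intro continuous_intros) (use \<Psi>nz in \<open>auto simp: \<Psi>_def \<pi>_def\<close>)
  have Seq: "{u \<in> tEin. Bform v1 u > 0 \<and> Bform v2 u > 0} = nrm ` D"
  proof (intro equalityI subsetI)
    fix u assume u: "u \<in> {u \<in> tEin. Bform v1 u > 0 \<and> Bform v2 u > 0}"
    define t where "t = Bform v1 u"
    have t: "t > 0" using u by (simp add: t_def)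
    define x where "x = (1/t) *\<^sub>R u"
    have xx: "Bform x x = 0" using u by (simp add: x_def Bform_lin tEin_def)
    have x1: "Bform v1 x = 1" using t by (simp add: x_def Bform_lin t_def)
    have "Bform (\<pi> x) (\<pi> x) = -2 * Bform x w0"
      using v11 w00 vw xx x1 unfolding \<pi>_def by (simp add: simps algebra_simps)
    hence \<Psi>x: "\<Psi> x = x" using x1 unfolding \<Psi>_def by (simp add: \<pi>_def Bform_sym algebra_simps)
    have "Bform v2 x > 0" using u t by (simp add: x_def Bform_lin)
    hence "x \<in> D" by (simp add: D_def \<Psi>x)
    moreover have "nrm x = u"
    proof -
      have "norm u = 1" using u by (simp add: tEin_def)
      hence "norm x = 1/t" using t by (simp add: x_def)
      hence "nrm x = t *\<^sub>R x" by (simp add: nrm_def \<Psi>x)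
      thus ?thesis using t by (simp add: x_def)
    qed
    ultimately show "u \<in> nrm ` D" by blast
  next
    fix y assume "y \<in> nrm ` D"
    then obtain x where x: "x \<in> D" and y: "y = nrm x" by blast
    have np: "norm (\<Psi> x) > 0" using \<Psi>nz by simp
    show "y \<in> {u \<in> tEin. Bform v1 u > 0 \<and> Bform v2 u > 0}"
      using np x \<Psi>iso[of x] \<Psi>v1[of x] by (simp add: y nrm_def tEin_def Bform_lin D_def)
  qed
  have Qcoord: "Qf y = (norm (fst y) ^ 2 - (fst y \<bullet> fst v1) ^ 2) - (norm (snd y) ^ 2 - (snd y \<bullet> snd v1) ^ 2)" for y
    unfolding Qf_def Bform_def w0_def power2_norm_eq_inner
    by (simp add: inner_commute power2_eq_square algebra_simps inner_add_left inner_add_right)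
  have connD: "connected D"
  proof (cases "c = 0")
    case True
    define h :: "(real^'p) \<times> (real^'q)" where "h = (fst v2 - \<mu> *\<^sub>R fst v1, - (snd v2 - \<mu> *\<^sub>R snd v1))"
    have hlin: "Bform v2 x - Bform x v1 * \<mu> = inner h x" for x
      by (simp add: h_def Bform_def inner_prod_def inner_diff_left inner_commute algebra_simps)
    have e: "Bform v2 (\<Psi> x) = \<mu> + inner h x" for x
      unfolding Fexp True using hlin[of x] by simp
    hence "D = {x. inner h x > - \<mu>}" by (auto simp: D_def)
    thus ?thesis by (simp add: convex_connected convex_halfspace_gt)
  next
    case False
    define z0 where "z0 = (1/c) *\<^sub>R \<pi> v2"
    have Fz: "Bform v2 (\<Psi> x) = - (c / 2) * Qf (x - z0)" for x
      using v11 w00 vw iso2 False unfolding Fexp z0_def Qf_def \<pi>_def c_def \<mu>_def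
      by (simp add: simps field_simps)
    show ?thesis
    proof (cases "c > 0")
      case True
      have "connected {(a,b). norm a ^ 2 - (a \<bullet> fst v1) ^ 2 < norm b ^ 2 - (b \<bullet> snd v1) ^ 2}"
        by (rule conn_L) (use n1 n2 q in auto)
      moreover have "{(a,b). norm a ^ 2 - (a \<bullet> fst v1) ^ 2 < norm b ^ 2 - (b \<bullet> snd v1) ^ 2} = {y. Qf y < 0}"
        by (auto simp: Qcoord)
      ultimately have cq: "connected {y. Qf y < 0}" by simp
      have "D = (\<lambda>y. y + z0) ` {y. Qf y < 0}"
      proof -
        have "D = {x. Qf (x - z0) < 0}" using True by (auto simp: D_def Fz mult_less_0_iff)
        also have "\<dots> = (\<lambda>y. y + z0) ` {y. Qf y < 0}"
        proof (intro equalityI subsetI)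
          fix x assume "x \<in> {x. Qf (x - z0) < 0}"
          thus "x \<in> (\<lambda>y. y + z0) ` {y. Qf y < 0}" by (intro image_eqI[where x="x - z0"]) auto
        qed auto
        finally show ?thesis .
      qed
      moreover have "connected ((\<lambda>y. y + z0) ` {y. Qf y < 0})"
        by (rule connected_continuous_image[OF _ cq]) (intro continuous_intros)
      ultimately show ?thesis by simp
    next
      case False': False
      have "connected {(a,b). norm a ^ 2 - (a \<bullet> snd v1) ^ 2 < norm b ^ 2 - (b \<bullet> fst v1) ^ 2}"
        by (rule conn_L) (use n1 n2 p in auto)
      hence c0: "connected (prod.swap ` {(a,b). norm a ^ 2 - (a \<bullet> snd v1) ^ 2 < norm b ^ 2 - (b \<bullet> fst v1) ^ 2})"
        by (rule connected_continuous_image[OF continuous_on_swap])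
      have e1: "{y. Qf y > 0} = {y. norm (snd y) ^ 2 - (snd y \<bullet> snd v1) ^ 2 < norm (fst y) ^ 2 - (fst y \<bullet> fst v1) ^ 2}"
        by (simp add: Qcoord)
      have "prod.swap ` {(a,b). norm a ^ 2 - (a \<bullet> snd v1) ^ 2 < norm b ^ 2 - (b \<bullet> fst v1) ^ 2} = {y. Qf y > 0}"
        unfolding e1
      proof (intro equalityI subsetI)
        fix y assume "y \<in> {y. norm (snd y) ^ 2 - (snd y \<bullet> snd v1) ^ 2 < norm (fst y) ^ 2 - (fst y \<bullet> fst v1) ^ 2}"
        thus "y \<in> prod.swap ` {(a,b). norm a ^ 2 - (a \<bullet> snd v1) ^ 2 < norm b ^ 2 - (b \<bullet> fst v1) ^ 2}"
          by (intro image_eqI[where x="(snd y, fst y)"]) auto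
      qed auto
      hence "connected {y. Qf y > 0}" using c0 by simp
      then have cq: "connected {y. Qf y > 0}" .
      have "D = (\<lambda>y. y + z0) ` {y. Qf y > 0}"
      proof -
        have "c < 0" using False False' by simp
        hence "D = {x. Qf (x - z0) > 0}" by (auto simp: D_def Fz mult_less_0_iff zero_less_mult_iff)
        also have "\<dots> = (\<lambda>y. y + z0) ` {y. Qf y > 0}"
        proof (intro equalityI subsetI)
          fix x assume "x \<in> {x. Qf (x - z0) > 0}"
          thus "x \<in> (\<lambda>y. y + z0) ` {y. Qf y > 0}" by (intro image_eqI[where x="x - z0"]) auto
        qed auto
        finally show ?thesis .
      qed
      moreover have "connected ((\<lambda>y. y + z0) ` {y. Qf y > 0})"
        by (rule connected_continuous_image[OF _ cq]) (intro continuous_intros)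
      ultimately show ?thesis by simp
    qed
  qed
  show ?thesis unfolding Seq by (rule connected_continuous_image[OF cont connD])
qed


lemma tEin_nz: "u \<in> tEin \<Longrightarrow> u \<noteq> 0"
  by (auto simp: tEin_def)

lemma piX_mem: "w \<in> piX v \<longleftrightarrow> (\<exists>t. w = t *\<^sub>R v)"
  by (auto simp: piX_def)

lemma piX_scale: "t \<noteq> 0 \<Longrightarrow> piX (t *\<^sub>R v) = piX v"
proof -
  assume t: "t \<noteq> 0"
  show ?thesis
  proof (intro equalityI subsetI)
    fix w assume "w \<in> piX (t *\<^sub>R v)" then obtain s where "w = s *\<^sub>R (t *\<^sub>R v)" by (auto simp: piX_mem)
    thus "w \<in> piX v" by (auto simp: piX_mem)
  next
    fix w assume "w \<in> piX v" then obtain s where "w = s *\<^sub>R v" by (auto simp: piX_mem)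
    hence "w = (s / t) *\<^sub>R (t *\<^sub>R v)" using t by simp
    thus "w \<in> piX (t *\<^sub>R v)" unfolding piX_mem by blast
  qed
qed

lemma piX_neg: "piX (- v) = piX v"
  using piX_scale[of "-1" v] by simp

lemma piX_tEin_Ein: "u \<in> tEin \<Longrightarrow> piX u \<in> Ein"
proof -
  assume u: "u \<in> tEin"
  hence "u \<noteq> 0" "Bform u u = 0" by (auto simp: tEin_def)
  thus ?thesis unfolding Ein_def by blast
qed

lemma piX_eq_tEin:
  assumes "u \<in> tEin" "w \<in> tEin" "piX u = piX w"
  shows "w = u \<or> w = - u"
proof -
  have "w \<in> piX u" using assms(3) by (auto simp: piX_mem intro: exI[of _ 1])
  then obtain t where t: "w = t *\<^sub>R u" by (auto simp: piX_mem)
  have "norm w = \<bar>t\<bar> * norm u" by (simp add: t)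
  hence "\<bar>t\<bar> = 1" using assms(1,2) by (simp add: tEin_def)
  hence "t = 1 \<or> t = -1" by auto
  thus ?thesis using t by auto
qed

lemma piX_image_mem:
  assumes "X \<subseteq> tEin" "u \<in> tEin"
  shows "piX u \<in> piX ` X \<longleftrightarrow> u \<in> X \<or> - u \<in> X"
proof
  assume "piX u \<in> piX ` X"
  then obtain x where x: "x \<in> X" "piX u = piX x" by auto
  hence "x = u \<or> x = - u" using piX_eq_tEin[OF assms(2) _ x(2)] assms(1) by auto
  thus "u \<in> X \<or> - u \<in> X" using x by auto
next
  assume "u \<in> X \<or> - u \<in> X"
  thus "piX u \<in> piX ` X" by (metis image_eqI piX_neg)
qed

lemma tEin_neg: "u \<in> tEin \<Longrightarrow> - u \<in> tEin"
  by (simp add: tEin_def Bform_lin)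

lemma Ein_tEin: "y \<in> Ein \<Longrightarrow> \<exists>u\<in>tEin. y = piX u"
proof -
  assume "y \<in> Ein"
  then obtain v where v: "y = piX v" "v \<noteq> 0" "Bform v v = 0" by (auto simp: Ein_def)
  define u where "u = (1 / norm v) *\<^sub>R v"
  have "u \<in> tEin" using v by (simp add: u_def tEin_def Bform_lin)
  moreover have "piX u = y" using v by (simp add: u_def piX_scale)
  ultimately show ?thesis by auto
qed

lemma preimage_patch:
  assumes "v0 \<noteq> 0"
  shows "tEin \<inter> piX -` mink_patch_Ein (piX v0) = {u \<in> tEin. Bform v0 u \<noteq> 0}"
proof (intro equalityI subsetI)
  fix u assume u: "u \<in> tEin \<inter> piX -` mink_patch_Ein (piX v0)"
  then obtain v w where vw: "piX v0 = piX v" "piX u = piX w" "Bform v w \<noteq> 0"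
    by (auto simp: mink_patch_Ein_def)
  have "v0 \<in> piX v" using vw(1) by (metis piX_mem scaleR_one)
  then obtain s where s: "v0 = s *\<^sub>R v" by (auto simp: piX_mem)
  have "u \<in> piX w" using vw(2) by (metis piX_mem scaleR_one)
  then obtain t where t: "u = t *\<^sub>R w" by (auto simp: piX_mem)
  have "s \<noteq> 0" using s assms by auto
  moreover have "u \<noteq> 0" using tEin_nz[of u] u by blast
  hence "t \<noteq> 0" using t by auto
  ultimately have "Bform v0 u \<noteq> 0" using vw(3) by (simp add: s t Bform_lin)
  thus "u \<in> {u \<in> tEin. Bform v0 u \<noteq> 0}" using u by auto
next
  fix u assume u: "u \<in> {u \<in> tEin. Bform v0 u \<noteq> 0}"
  hence "piX u \<in> Ein" "Bform v0 u \<noteq> 0" "u \<in> tEin" using piX_tEin_Ein[of u] by simp_all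
  hence "piX u \<in> mink_patch_Ein (piX v0)" unfolding mink_patch_Ein_def by blast
  thus "u \<in> tEin \<inter> piX -` mink_patch_Ein (piX v0)" using \<open>u \<in> tEin\<close> by blast
qed

definition Pp :: "((real^'p) \<times> (real^'q)) \<Rightarrow> ((real^'p) \<times> (real^'q)) set" where
  "Pp v = {u \<in> tEin. Bform v u > 0}"

lemma component_sign:
  fixes w :: "(real^'p) \<times> (real^'q)"
  assumes cP: "connected (Pp w)" and u: "u \<in> Pp w"
  shows "connected_component_set (Pp w \<union> Pp (- w)) u = Pp w"
proof (intro equalityI)
  show "Pp w \<subseteq> connected_component_set (Pp w \<union> Pp (- w)) u"
    by (rule connected_component_maximal[OF u cP]) auto
next
  let ?C = "connected_component_set (Pp w \<union> Pp (- w)) u"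
  have cC: "connected ?C" by (rule connected_connected_component)
  have sub: "?C \<subseteq> Pp w \<union> Pp (- w)" by (rule connected_component_subset)
  have uC: "u \<in> ?C" using u by auto
  show "?C \<subseteq> Pp w"
  proof
    fix y assume y: "y \<in> ?C"
    show "y \<in> Pp w"
    proof (rule ccontr)
      assume "y \<notin> Pp w"
      hence yn: "Bform w y < 0" using sub y by (auto simp: Pp_def Bform_lin)
      have cg: "connected ((\<lambda>z. Bform w z) ` ?C)"
        by (intro connected_continuous_image cC continuous_intros)
      have "Bform w u > 0" using u by (simp add: Pp_def)
      then obtain r where r: "r \<in> (\<lambda>z. Bform w z) ` ?C" "inner (1::real) r = 0"
        using connected_ivt_hyperplane[OF cg imageI[OF y] imageI[OF uC], of 1 0] yn by auto
      then obtain z where "z \<in> ?C" "Bform w z = 0" by auto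
      thus False using sub by (auto simp: Pp_def Bform_lin)
    qed
  qed
qed

lemma patch_component:
  fixes M :: "((real^'p::finite) \<times> (real^'q::finite)) set"
  assumes p: "CARD('p) \<ge> 3" and q: "CARD('q) \<ge> 3" and M: "mink_patch_tEin M"
  shows "\<exists>w. norm (fst w) = 1 \<and> norm (snd w) = 1 \<and> M = Pp w"
proof -
  obtain x where x: "x \<in> Ein" "M \<in> components (tEin \<inter> piX -` mink_patch_Ein x)"
    using M by (auto simp: mink_patch_tEin_def)
  then obtain v0 where v0: "x = piX v0" "v0 \<noteq> 0" "Bform v0 v0 = 0" by (auto simp: Ein_def)
  have eqn: "fst v0 \<bullet> fst v0 = snd v0 \<bullet> snd v0" using v0(3) by (simp add: Bform_def)
  have "fst v0 \<noteq> 0"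
  proof
    assume "fst v0 = 0"
    hence "snd v0 = 0" using eqn by simp
    with \<open>fst v0 = 0\<close> v0(2) show False by (simp add: prod_eq_iff)
  qed
  define r where "r = norm (fst v0)"
  have r: "r > 0" using \<open>fst v0 \<noteq> 0\<close> by (simp add: r_def)
  have rs: "norm (snd v0) = r" using eqn by (simp add: r_def norm_eq_sqrt_inner)
  define w where "w = (1 / r) *\<^sub>R v0"
  have wn: "norm (fst w) = 1" "norm (snd w) = 1" using r rs by (simp_all add: w_def r_def)
  have wn': "norm (fst (- w)) = 1" "norm (snd (- w)) = 1" using wn by simp_all
  have T: "tEin \<inter> piX -` mink_patch_Ein x = Pp w \<union> Pp (- w)"
    unfolding v0(1) preimage_patch[OF v0(2)] using r
    by (auto simp: Pp_def w_def Bform_lin zero_less_divide_iff divide_less_0_iff)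
  have isow: "Bform w w = 0" "Bform (- w) (- w) = 0" using wn by (simp_all add: Bform_def dot_square_norm)
  have cw: "connected (Pp w)"
    using S_connected[OF p q wn isow(1)] by (simp add: Pp_def)
  have cw': "connected (Pp (- w))"
    using S_connected[OF p q wn' isow(2)] by (simp add: Pp_def)
  obtain u where u: "u \<in> Pp w \<union> Pp (- w)" "M = connected_component_set (Pp w \<union> Pp (- w)) u"
    using x(2) unfolding T components_iff by auto
  show ?thesis
  proof (cases "u \<in> Pp w")
    case True
    hence "M = Pp w" using component_sign[OF cw True] u(2) by simp
    thus ?thesis using wn by blast
  next
    case False
    hence u': "u \<in> Pp (- w)" using u(1) by auto
    have "Pp w \<union> Pp (- w) = Pp (- w) \<union> Pp (- (- w))" by auto
    hence "M = Pp (- w)" using component_sign[OF cw' u'] u(2) by simp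
    thus ?thesis using wn' by blast
  qed
qed

lemma istop_Ein: "istopology (\<lambda>U::((real^'p::finite) \<times> (real^'q::finite)) set set. U \<subseteq> Ein \<and> openin (top_of_set tEin) {v \<in> tEin. piX v \<in> U})"
proof -
  let ?L = "\<lambda>U::((real^'p) \<times> (real^'q)) set set. U \<subseteq> Ein \<and> openin (top_of_set tEin) {v \<in> tEin. piX v \<in> U}"
  have A: "\<forall>S T. ?L S \<longrightarrow> ?L T \<longrightarrow> ?L (S \<inter> T)"
  proof (intro allI impI)
    fix S T assume "?L S" "?L T"
    moreover have "{v \<in> tEin. piX v \<in> S \<inter> T} = {v \<in> tEin. piX v \<in> S} \<inter> {v \<in> tEin. piX v \<in> T}" by auto
    ultimately show "?L (S \<inter> T)" by (auto intro: openin_Int)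
  qed
  have B: "\<forall>K. (\<forall>S\<in>K. ?L S) \<longrightarrow> ?L (\<Union>K)"
  proof (intro allI impI)
    fix K assume K: "\<forall>S\<in>K. ?L S"
    have "{v \<in> tEin. piX v \<in> \<Union>K} = \<Union> ((\<lambda>S. {v \<in> tEin. piX v \<in> S}) ` K)" by auto
    moreover have "openin (top_of_set tEin) (\<Union> ((\<lambda>S. {v \<in> tEin. piX v \<in> S}) ` K))"
      using K by (intro openin_Union) auto
    ultimately show "?L (\<Union>K)" using K by auto
  qed
  show ?thesis unfolding istopology_def using A B by blast
qed

lemma openin_Ein: "openin Ein_top U \<longleftrightarrow> U \<subseteq> Ein \<and> openin (top_of_set tEin) {v \<in> tEin. piX v \<in> U}"
  unfolding Ein_top_def by (simp only: topology_inverse'[OF istop_Ein])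

lemma topspace_Ein: "topspace Ein_top = Ein"
proof -
  have e: "{v \<in> tEin. piX v \<in> Ein} = tEin" using piX_tEin_Ein by auto
  have "openin Ein_top Ein" unfolding openin_Ein e by simp
  hence "Ein \<subseteq> topspace Ein_top" by (rule openin_subset)
  moreover have "topspace Ein_top \<subseteq> Ein"
    unfolding topspace_def using openin_Ein by auto
  ultimately show ?thesis by auto
qed

lemma cont_piX: "continuous_map (top_of_set tEin) Ein_top piX"
  unfolding continuous_map topspace_Ein
  using piX_tEin_Ein openin_Ein by auto

lemma clopen_component:
  assumes "connectedin X C" "openin X C" "closedin X C" "C \<noteq> {}"
  shows "C \<in> connected_components_of X"
proof -
  obtain x where x: "x \<in> C" using assms(4) by auto
  have xt: "x \<in> topspace X" using openin_subset[OF assms(2)] x by auto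
  let ?K = "connected_component_of_set X x"
  have K: "?K \<in> connected_components_of X" using xt connected_component_in_connected_components_of by metis
  have "C \<subseteq> ?K" by (rule connected_component_of_maximal[OF assms(1) x])
  moreover have "?K \<subseteq> C \<or> disjnt ?K C"
    by (rule connectedin_clopen_cases[OF connectedin_connected_component_of assms(3,2)])
  ultimately have "?K = C" using x by (auto simp: disjnt_def)
  thus ?thesis using K by simp
qed

theorem mainTheorem5:
  fixes M1 M2 :: "((real^'p::finite) \<times> (real^'q::finite)) set"
  assumes "CARD('p) \<ge> 3" and "CARD('q) \<ge> 3"
    and "mink_patch_tEin M1" and "mink_patch_tEin M2"
    and "M1 \<inter> M2 \<noteq> {}"
  shows "piX ` (M1 \<inter> M2) \<in> connected_components_of (subtopology Ein_top (piX ` M1 \<inter> piX ` M2))"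
proof -
  obtain w1 where w1: "norm (fst w1) = 1" "norm (snd w1) = 1" "M1 = Pp w1"
    using patch_component[OF assms(1,2,3)] by blast
  obtain w2 where w2: "norm (fst w2) = 1" "norm (snd w2) = 1" "M2 = Pp w2"
    using patch_component[OF assms(1,2,4)] by blast
  have iso2: "Bform w2 w2 = 0" using w2 by (simp add: Bform_def dot_square_norm)
  define S where "S = M1 \<inter> M2"
  have Seq: "S = {u \<in> tEin. Bform w1 u > 0 \<and> Bform w2 u > 0}" by (auto simp: S_def w1 w2 Pp_def)
  have cS: "connected S" unfolding Seq by (rule S_connected[OF assms(1,2) w1(1,2) iso2])
  have St: "S \<subseteq> tEin" "M1 \<subseteq> tEin" "M2 \<subseteq> tEin" by (auto simp: Seq w1 w2 Pp_def)
  define g where "g = (\<lambda>u. Bform w1 u * Bform w2 u)"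
  have gneg: "g (- u) = g u" for u by (simp add: g_def Bform_lin)
  have memC: "piX u \<in> piX ` S \<longleftrightarrow> g u > 0" if "u \<in> tEin" for u
    using piX_image_mem[OF St(1) that] that tEin_neg[OF that]
    by (auto simp: Seq g_def Bform_lin zero_less_mult_iff)
  have memA: "piX u \<in> piX ` M1 \<inter> piX ` M2 \<longleftrightarrow> g u \<noteq> 0" if "u \<in> tEin" for u
    using piX_image_mem[OF St(2) that] piX_image_mem[OF St(3) that] that tEin_neg[OF that]
    by (auto simp: w1 w2 Pp_def g_def Bform_lin)
  have contg: "continuous_on tEin g" unfolding g_def by (intro continuous_intros)
  have CA: "piX ` S \<subseteq> piX ` M1 \<inter> piX ` M2" by (auto simp: S_def)
  have "piX ` M1 \<subseteq> Ein" using St(2) piX_tEin_Ein by auto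
  hence AE: "piX ` M1 \<inter> piX ` M2 \<subseteq> Ein" by auto
  have CE: "piX ` S \<subseteq> Ein" using CA AE by (rule subset_trans)
  have openC: "openin Ein_top (piX ` S)"
  proof -
    have "{v \<in> tEin. piX v \<in> piX ` S} = tEin \<inter> g -` {0<..}" using memC by auto
    moreover have "openin (top_of_set tEin) (tEin \<inter> g -` {0<..})"
      by (rule continuous_openin_preimage_gen[OF contg open_greaterThan])
    ultimately show ?thesis unfolding openin_Ein using CE by simp
  qed
  define U2 where "U2 = piX ` {v \<in> tEin. g v < 0}"
  have openU2: "openin Ein_top U2"
  proof -
    have "{v \<in> tEin. piX v \<in> U2} = tEin \<inter> g -` {..<0}"
      using piX_image_mem[of "{v \<in> tEin. g v < 0}"] tEin_neg gneg unfolding U2_def by auto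
    moreover have "openin (top_of_set tEin) (tEin \<inter> g -` {..<0})"
      by (rule continuous_openin_preimage_gen[OF contg open_lessThan])
    ultimately show ?thesis unfolding openin_Ein using piX_tEin_Ein by (auto simp: U2_def)
  qed
  let ?X = "subtopology Ein_top (piX ` M1 \<inter> piX ` M2)"
  have conn: "connectedin ?X (piX ` S)"
    unfolding connectedin_subtopology
  proof
    have "connectedin (top_of_set tEin) S" using cS St(1) by (simp add: connectedin_subtopology)
    thus "connectedin Ein_top (piX ` S)" by (rule connectedin_continuous_map_image[OF cont_piX])
  qed (rule CA)
  have op: "openin ?X (piX ` S)"
    unfolding openin_subtopology using openC CA by blast
  have cl: "closedin ?X (piX ` S)"
    unfolding closedin_subtopology
  proof (intro exI conjI)
    show "closedin Ein_top (Ein - U2)"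
      using openU2 by (simp add: closedin_def topspace_Ein openin_subset Diff_Diff_Int inf_absorb2 openin_Ein)
    show "piX ` S = (Ein - U2) \<inter> (piX ` M1 \<inter> piX ` M2)"
    proof (intro equalityI subsetI)
      fix y assume y: "y \<in> piX ` S"
      then obtain u where u: "u \<in> S" "y = piX u" by auto
      have ut: "u \<in> tEin" using u St by auto
      have "g u > 0" using memC[OF ut] u by auto
      moreover have "y \<notin> U2"
      proof
        assume "y \<in> U2"
        then obtain v where "v \<in> tEin" "g v < 0" "y = piX v" by (auto simp: U2_def)
        hence "v = u \<or> v = -u" using piX_eq_tEin[OF ut] u by auto
        thus False using \<open>g v < 0\<close> \<open>g u > 0\<close> gneg[of u] by auto
      qed
      ultimately show "y \<in> (Ein - U2) \<inter> (piX ` M1 \<inter> piX ` M2)" using y CA CE by auto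
    next
      fix y assume y: "y \<in> (Ein - U2) \<inter> (piX ` M1 \<inter> piX ` M2)"
      then obtain u where u: "u \<in> M1" "y = piX u" by auto
      have ut: "u \<in> tEin" using u St by auto
      have "g u \<noteq> 0" using memA[OF ut] y u by auto
      moreover have "\<not> g u < 0" using y u ut by (auto simp: U2_def)
      ultimately show "y \<in> piX ` S" using memC[OF ut] u by auto
    qed
  qed
  have ne: "piX ` S \<noteq> {}" using assms(5) by (simp add: S_def)
  show ?thesis using clopen_component[OF conn op cl ne] by (simp add: S_def)
qed

end
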